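(* Let $\mathbf{T}\subset\mathbb{S}^3$ be a $\mathbb{Z}_2$-symmetric spherical tetrahedron with dihedral angles $A$, $B=E$, $C=F$, $D$ and edge lengths $l_A$, $l_B=l_E$, $l_C=l_F$, $l_D$. Put $a_+=\cos\frac{l_A+l_D}{2}$, $a_-=\cos\frac{l_A-l_D}{2}$, $b=\cos l_B$, $c=\cos l_C$, $$\Delta^\star=(a_++a_-+b+c)(a_++a_--b-c)(a_+-a_--b+c)(a_+-a_-+b-c),\qquad t^2=\frac{4\,(a_+a_--bc)(a_+b-a_-c)(a_+c-a_-b)}{\Delta^\star},$$ and let $s^\star_{ij}$ ($i,j=0,1,2,3$) be the $(i,j)$-cofactors of the matrix $$G^\star_s=\begin{pmatrix}1&\frac{a_+}{a_-}&\frac{b}{a_-}&\frac{c}{a_-}\\\frac{a_+}{a_-}&1&\frac{c}{a_-}&\frac{b}{a_-}\\\frac{b}{a_-}&\frac{c}{a_-}&1&\frac{a_+}{a_-}\\\frac{c}{a_-}&\frac{b}{a_-}&\frac{a_+}{a_-}&1\end{pmatrix}.$$ Then (i) $a_-^2-t^2=a_-^6\,(s^\star_{00})^2/\Delta^\star$; (ii) $a_+^2-t^2=a_-^6\,(s^\star_{01})^2/\Delta^\star$; (iii) $b^2-t^2=a_-^6\,(s^\star_{02})^2/\Delta^\star$; (iv) $c^2-t^2=a_-^6\,(s^\star_{03})^2/\Delta^\star$.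
   Context: A spherical tetrahedron $\mathbf{T}\subset\mathbb{S}^3\subset\mathbb{R}^4$ is the intersection of $\mathbb{S}^3$ with the cone over four linearly independent unit vectors $\mathrm{p}_0,\dots,\mathrm{p}_3$. Edge lengths $l_{ij}\in[0,\pi]$: $\cos l_{ij}=\langle\mathrm{p}_i,\mathrm{p}_j\rangle$; dihedral angles $\alpha_{ij}\in[0,\pi]$: $\cos\alpha_{ij}=-\langle\mathrm{v}_i,\mathrm{v}_j\rangle$ with $\mathrm{v}_i$ the outer unit normal of the face opposite $\mathrm{p}_i$. Notation: $l_A=l_{01}$, $l_B=l_{02}$, $l_C=l_{03}$, $l_D=l_{23}$, $l_E=l_{13}$, $l_F=l_{12}$; $A,\dots,F$ are the dihedral angles along the edges of lengths $l_A,\dots,l_F$. $\mathbf{T}$ is $\mathbb{Z}_2$-symmetric if invariant under rotation through $\pi$ about the axis through the midpoints of the edges $\mathrm{p}_0\mathrm{p}_1$ and $\mathrm{p}_2\mathrm{p}_3$ (so $l_B=l_E$, $l_C=l_F$, $B=E$, $C=F$). The $(i,j)$-cofactor of a matrix is $(-1)^{i+j}$ times the determinant of the matrix with row $i$ and column $j$ deleted. *)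

theory Defs
  imports "HOL-Analysis.Analysis"
begin

text \<open>Square matrices of size n represented as functions nat => nat => real
  (only entries with indices < n matter).\<close>

definition ndet :: "nat \<Rightarrow> (nat \<Rightarrow> nat \<Rightarrow> real) \<Rightarrow> real" where
  "ndet n A = (\<Sum>\<sigma> | \<sigma> permutes {..<n}. of_int (sign \<sigma>) * (\<Prod>i<n. A i (\<sigma> i)))"

definition del_rc :: "nat \<Rightarrow> nat \<Rightarrow> (nat \<Rightarrow> nat \<Rightarrow> real) \<Rightarrow> nat \<Rightarrow> nat \<Rightarrow> real" where
  "del_rc i j A = (\<lambda>k l. A (if k < i then k else Suc k) (if l < j then l else Suc l))"

definition ncofactor :: "nat \<Rightarrow> (nat \<Rightarrow> nat \<Rightarrow> real) \<Rightarrow> nat \<Rightarrow> nat \<Rightarrow> real" where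
  "ncofactor n A i j = (-1) ^ (i + j) * ndet (n - 1) (del_rc i j A)"

definition spherical_tetrahedron :: "(nat \<Rightarrow> real^4) \<Rightarrow> bool" where
  "spherical_tetrahedron p \<longleftrightarrow> (\<forall>i<4. norm (p i) = 1) \<and> inj_on p {..<4} \<and> independent (p ` {..<4})"

definition edge_len :: "(nat \<Rightarrow> real^4) \<Rightarrow> nat \<Rightarrow> nat \<Rightarrow> real" where
  "edge_len p i j = arccos (p i \<bullet> p j)"

text \<open>Z2-symmetry: invariance under the rotation through pi of R^4 that swaps
  p0 <-> p1 and p2 <-> p3 (i.e. the half-turn about the great circle through the
  midpoints of edges p0p1 and p2p3). An orthogonal map with these vertex images
  is exactly that half-turn.\<close>
definition Z2_symmetric :: "(nat \<Rightarrow> real^4) \<Rightarrow> bool" where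
  "Z2_symmetric p \<longleftrightarrow> (\<exists>f. orthogonal_transformation f \<and>
      f (p 0) = p 1 \<and> f (p 1) = p 0 \<and> f (p 2) = p 3 \<and> f (p 3) = p 2)"

definition Gs :: "real \<Rightarrow> real \<Rightarrow> real \<Rightarrow> real \<Rightarrow> nat \<Rightarrow> nat \<Rightarrow> real" where
  "Gs ap am b c = (\<lambda>i j.
     [[1, ap/am, b/am, c/am],
      [ap/am, 1, c/am, b/am],
      [b/am, c/am, 1, ap/am],
      [c/am, b/am, ap/am, 1]] ! i ! j)"

end

theory Submission imports Defs begin

lemma ndet3: "ndet 3 A = A 0 0 * A 1 1 * A 2 2 + A 0 1 * A 1 2 * A 2 0 + A 0 2 * A 1 0 * A 2 1
   - A 0 0 * A 1 2 * A 2 1 - A 0 1 * A 1 0 * A 2 2 - A 0 2 * A 1 1 * A 2 0"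
proof -
  have u: "{..<3::nat} = insert 0 (insert 1 {2})" by auto
  have f1: "finite (insert (1::nat) {2})" "0 \<notin> insert (1::nat) {2}" by auto
  have f2: "finite {2::nat}" "1 \<notin> {2::nat}" by auto
  have p: "(\<Prod>i<(3::nat). f i) = f 0 * f 1 * (f 2::real)" for f
    by (simp add: numeral_3_eq_3 numeral_2_eq_2 lessThan_Suc)
  show ?thesis
    unfolding ndet_def p u
    unfolding sum_over_permutations_insert[OF f1]
    unfolding sum_over_permutations_insert[OF f2]
    unfolding permutes_sing
    by (simp add: sign_swap_id permutation_swap_id sign_compose sign_id swap_id_eq algebra_simps)
qed

definition Hm :: "real \<Rightarrow> real \<Rightarrow> real \<Rightarrow> real \<Rightarrow> nat \<Rightarrow> nat \<Rightarrow> real" where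
  "Hm ap am b c = (\<lambda>i j.
     [[am, ap, b, c],
      [ap, am, c, b],
      [b, c, am, ap],
      [c, b, ap, am]] ! i ! j)"

lemma GH: "am \<noteq> 0 \<Longrightarrow> i < 4 \<Longrightarrow> j < 4 \<Longrightarrow> Gs ap am b c i j = Hm ap am b c i j / am"
  by (auto simp: Gs_def Hm_def less_Suc_eq numeral_eq_Suc)

lemma ndet3_scale: "ndet 3 (\<lambda>k l. t * A k l) = t^3 * ndet 3 A"
  unfolding ndet3 by (simp add: algebra_simps power3_eq_cube)

lemma cube3: assumes "am \<noteq> 0" shows "am^3 * ndet 3 (\<lambda>k l. A k l / am) = ndet 3 A"
proof -
  have "ndet 3 (\<lambda>k l. A k l / am) = (1/am)^3 * ndet 3 A"
    using ndet3_scale[of "1/am" A] by simp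
  then show ?thesis using assms by (simp add: field_simps)
qed

lemma scale: assumes "am \<noteq> 0" "j < 4"
  shows "am^3 * ncofactor 4 (Gs ap am b c) 0 j = ncofactor 4 (Hm ap am b c) 0 j"
proof -
  have pw: "del_rc 0 j (Gs ap am b c) k l = del_rc 0 j (Hm ap am b c) k l / am" if "k < 3" "l < 3" for k l
    using that assms by (auto simp: del_rc_def intro!: GH)
  have "ndet 3 (del_rc 0 j (Gs ap am b c)) = ndet 3 (\<lambda>k l. del_rc 0 j (Hm ap am b c) k l / am)"
    unfolding ndet3 by (simp add: pw)
  then have e: "am^3 * ndet 3 (del_rc 0 j (Gs ap am b c)) = ndet 3 (del_rc 0 j (Hm ap am b c))"
    using cube3[OF assms(1)] by simp
  have "am^3 * ncofactor 4 (Gs ap am b c) 0 j = (-1)^j * (am^3 * ndet 3 (del_rc 0 j (Gs ap am b c)))"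
    by (simp add: ncofactor_def)
  also have "\<dots> = ncofactor 4 (Hm ap am b c) 0 j"
    unfolding e by (simp add: ncofactor_def)
  finally show ?thesis .
qed

lemma alg:
  fixes ap am b c :: real
  assumes am: "am \<noteq> 0" and D: "(ap + am + b + c) * (ap + am - b - c) * (ap - am - b + c) * (ap - am + b - c) \<noteq> 0"
  shows "let \<Delta> = (ap + am + b + c) * (ap + am - b - c) * (ap - am - b + c) * (ap - am + b - c);
             t2 = 4 * (ap * am - b * c) * (ap * b - am * c) * (ap * c - am * b) / \<Delta>;
             s = ncofactor 4 (Gs ap am b c)
         in am\<^sup>2 - t2 = am ^ 6 * (s 0 0)\<^sup>2 / \<Delta> \<and>
            ap\<^sup>2 - t2 = am ^ 6 * (s 0 1)\<^sup>2 / \<Delta> \<and>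
            b\<^sup>2 - t2 = am ^ 6 * (s 0 2)\<^sup>2 / \<Delta> \<and>
            c\<^sup>2 - t2 = am ^ 6 * (s 0 3)\<^sup>2 / \<Delta>"
proof -
  define \<Delta> where "\<Delta> = (ap + am + b + c) * (ap + am - b - c) * (ap - am - b + c) * (ap - am + b - c)"
  define N where "N = 4 * (ap * am - b * c) * (ap * b - am * c) * (ap * c - am * b)"
  have key: "v\<^sup>2 - N / \<Delta> = am ^ 6 * (ncofactor 4 (Gs ap am b c) 0 j)\<^sup>2 / \<Delta>"
    if j: "j < 4" and e: "v\<^sup>2 * \<Delta> - N = (ncofactor 4 (Hm ap am b c) 0 j)\<^sup>2" for v j
  proof -
    have "am ^ 6 * (ncofactor 4 (Gs ap am b c) 0 j)\<^sup>2 = (am^3 * ncofactor 4 (Gs ap am b c) 0 j)\<^sup>2"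
      by (simp add: power_mult_distrib)
    also have "\<dots> = v\<^sup>2 * \<Delta> - N" using scale[OF am j] e by simp
    finally have X: "am ^ 6 * (ncofactor 4 (Gs ap am b c) 0 j)\<^sup>2 = v\<^sup>2 * \<Delta> - N" .
    have DD: "\<Delta> \<noteq> 0" using D unfolding \<Delta>_def .
    show ?thesis unfolding X using DD by (simp add: field_simps)
  qed
  have e0: "am\<^sup>2 * \<Delta> - N = (ncofactor 4 (Hm ap am b c) 0 0)\<^sup>2"
    unfolding \<Delta>_def N_def by (simp add: ncofactor_def ndet3 del_rc_def Hm_def) algebra
  have e1: "ap\<^sup>2 * \<Delta> - N = (ncofactor 4 (Hm ap am b c) 0 1)\<^sup>2"
    unfolding \<Delta>_def N_def by (simp add: ncofactor_def ndet3 del_rc_def Hm_def) algebra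
  have e2: "b\<^sup>2 * \<Delta> - N = (ncofactor 4 (Hm ap am b c) 0 2)\<^sup>2"
    unfolding \<Delta>_def N_def by (simp add: ncofactor_def ndet3 del_rc_def Hm_def) algebra
  have e3: "c\<^sup>2 * \<Delta> - N = (ncofactor 4 (Hm ap am b c) 0 3)\<^sup>2"
    unfolding \<Delta>_def N_def by (simp add: ncofactor_def ndet3 del_rc_def Hm_def) algebra
  show ?thesis unfolding Let_def \<Delta>_def[symmetric] N_def[symmetric]
    using key[OF _ e0] key[OF _ e1] key[OF _ e2] key[OF _ e3] by simp
qed

lemma dep4:
  assumes T: "spherical_tetrahedron p"
    and eq: "a0 *\<^sub>R p 0 + a1 *\<^sub>R p 1 + a2 *\<^sub>R p 2 + a3 *\<^sub>R p 3 = 0"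
  shows "a0 = 0 \<and> a1 = 0 \<and> a2 = 0 \<and> a3 = 0"
proof (rule ccontr)
  assume nz: "\<not> (a0 = 0 \<and> a1 = 0 \<and> a2 = 0 \<and> a3 = 0)"
  have inj: "inj_on p {..<4}" and ind: "independent (p ` {..<4})" using T unfolding spherical_tetrahedron_def by auto
  have S: "p ` {..<4} = {p 0, p 1, p 2, p 3}" by (auto simp: lessThan_def numeral_eq_Suc less_Suc_eq image_def)
  have d: "p 0 \<noteq> p 1" "p 0 \<noteq> p 2" "p 0 \<noteq> p 3" "p 1 \<noteq> p 2" "p 1 \<noteq> p 3" "p 2 \<noteq> p 3"
  proof -
    have q: "\<And>i j. i < 4 \<Longrightarrow> j < 4 \<Longrightarrow> p i = p j \<Longrightarrow> i = j" using inj by (auto simp: inj_on_def)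
    show "p 0 \<noteq> p 1" "p 0 \<noteq> p 2" "p 0 \<noteq> p 3" "p 1 \<noteq> p 2" "p 1 \<noteq> p 3" "p 2 \<noteq> p 3"
      using q[of 0 1] q[of 0 2] q[of 0 3] q[of 1 2] q[of 1 3] q[of 2 3] by auto
  qed
  define u where "u v = (if v = p 0 then a0 else if v = p 1 then a1 else if v = p 2 then a2 else a3)" for v
  have sum: "(\<Sum>v\<in>{p 0, p 1, p 2, p 3}. u v *\<^sub>R v) = 0"
    using d eq by (simp add: u_def algebra_simps)
  have "\<exists>v\<in>{p 0, p 1, p 2, p 3}. u v \<noteq> 0" using nz d by (auto simp: u_def)
  then have "dependent {p 0, p 1, p 2, p 3}"
    using sum by (subst real_vector.dependent_finite) auto
  then show False using ind S by simp
qed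

lemma cs_ne:
  fixes u w :: "real^4"
  assumes "\<And>\<alpha> \<beta>. \<alpha> *\<^sub>R u + \<beta> *\<^sub>R w = 0 \<Longrightarrow> \<alpha> = 0 \<and> \<beta> = 0"
  shows "(u \<bullet> w)\<^sup>2 \<noteq> (u \<bullet> u) * (w \<bullet> w)"
proof
  assume e: "(u \<bullet> w)\<^sup>2 = (u \<bullet> u) * (w \<bullet> w)"
  have "\<bar>u \<bullet> w\<bar> = norm u * norm w"
  proof -
    have "\<bar>u \<bullet> w\<bar>\<^sup>2 = (norm u * norm w)\<^sup>2"
      using e by (simp add: power_mult_distrib dot_square_norm)
    then show ?thesis by (metis abs_ge_zero norm_ge_zero mult_nonneg_nonneg power2_eq_iff_nonneg)
  qed
  then have h: "norm u *\<^sub>R w = norm w *\<^sub>R u \<or> norm u *\<^sub>R w = - norm w *\<^sub>R u"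
    using norm_cauchy_schwarz_abs_eq by blast
  show False
  proof (cases "u = 0")
    case True
    then show False using assms[of 1 0] by simp
  next
    case False
    then have "norm u \<noteq> 0" by simp
    moreover from h have "(- norm w) *\<^sub>R u + norm u *\<^sub>R w = 0 \<or> norm w *\<^sub>R u + norm u *\<^sub>R w = 0"
      by (auto simp: algebra_simps)
    ultimately show False using assms by blast
  qed
qed

theorem lemma5:
  fixes p :: "nat \<Rightarrow> real^4"
  assumes "spherical_tetrahedron p" and "Z2_symmetric p"
  shows "let lA = edge_len p 0 1; lB = edge_len p 0 2; lC = edge_len p 0 3;
             lD = edge_len p 2 3;
             ap = cos ((lA + lD) / 2); am = cos ((lA - lD) / 2);
             b = cos lB; c = cos lC;
             \<Delta> = (ap + am + b + c) * (ap + am - b - c) * (ap - am - b + c) * (ap - am + b - c);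
             t2 = 4 * (ap * am - b * c) * (ap * b - am * c) * (ap * c - am * b) / \<Delta>;
             s = ncofactor 4 (Gs ap am b c)
         in am\<^sup>2 - t2 = am ^ 6 * (s 0 0)\<^sup>2 / \<Delta> \<and>
            ap\<^sup>2 - t2 = am ^ 6 * (s 0 1)\<^sup>2 / \<Delta> \<and>
            b\<^sup>2 - t2 = am ^ 6 * (s 0 2)\<^sup>2 / \<Delta> \<and>
            c\<^sup>2 - t2 = am ^ 6 * (s 0 3)\<^sup>2 / \<Delta>"
proof -
  note T = assms(1)
  obtain f where f: "orthogonal_transformation f" "f (p 0) = p 1" "f (p 1) = p 0" "f (p 2) = p 3" "f (p 3) = p 2"
    using assms(2) unfolding Z2_symmetric_def by blast
  have fi: "f x \<bullet> f y = x \<bullet> y" for x y using f(1) unfolding orthogonal_transformation_def by blast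
  have n1: "p i \<bullet> p i = 1" if "i < 4" for i
    using T that unfolding spherical_tetrahedron_def by (simp add: dot_square_norm)
  have n0: "p 0 \<bullet> p 0 = 1" "p 1 \<bullet> p 1 = 1" "p 2 \<bullet> p 2 = 1" "p 3 \<bullet> p 3 = 1" using n1 by auto
  have b13: "p 1 \<bullet> p 3 = p 0 \<bullet> p 2" using fi[of "p 0" "p 2"] f by simp
  have c12: "p 1 \<bullet> p 2 = p 0 \<bullet> p 3" using fi[of "p 0" "p 3"] f by simp
  have bnd: "-1 \<le> p i \<bullet> p j \<and> p i \<bullet> p j \<le> 1" if "i < 4" "j < 4" for i j
  proof -
    have "\<bar>p i \<bullet> p j\<bar> \<le> norm (p i) * norm (p j)" by (rule Cauchy_Schwarz_ineq2)
    also have "\<dots> = 1" using T that unfolding spherical_tetrahedron_def by simp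
    finally show ?thesis by auto
  qed
  have cosl: "cos (edge_len p i j) = p i \<bullet> p j" if "i < 4" "j < 4" for i j
    unfolding edge_len_def using bnd[OF that] by (simp add: cos_arccos)
  define lA where "lA = edge_len p 0 1"
  define lD where "lD = edge_len p 2 3"
  define ap where "ap = cos ((lA + lD) / 2)"
  define am where "am = cos ((lA - lD) / 2)"
  define b where "b = cos (edge_len p 0 2)"
  define c where "c = cos (edge_len p 0 3)"
  define cA where "cA = p 0 \<bullet> p 1"
  define cD where "cD = p 2 \<bullet> p 3"
  have cA: "cos lA = cA" unfolding lA_def cA_def by (rule cosl) auto
  have cD: "cos lD = cD" unfolding lD_def cD_def by (rule cosl) auto
  have bb: "b = p 0 \<bullet> p 2" unfolding b_def by (rule cosl) auto
  have cc: "c = p 0 \<bullet> p 3" unfolding c_def by (rule cosl) auto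
  have lArange: "0 \<le> lA" "lA \<le> pi" unfolding lA_def edge_len_def using bnd[of 0 1]
    by (auto intro: arccos_lbound arccos_ubound)
  have lDrange: "0 \<le> lD" "lD \<le> pi" unfolding lD_def edge_len_def using bnd[of 2 3]
    by (auto intro: arccos_lbound arccos_ubound)
  have trig1: "cA + cD = 2 * ap * am" and trig2: "cA * cD = ap\<^sup>2 + am\<^sup>2 - 1"
  proof -
    define x where "x = (lA + lD) / 2"
    define y where "y = (lA - lD) / 2"
    have A: "lA = x + y" unfolding x_def y_def by (simp add: field_simps)
    have D: "lD = x - y" unfolding x_def y_def by (simp add: field_simps)
    have cA': "cA = cos x * cos y - sin x * sin y" using cA unfolding A by (simp add: cos_add)
    have cD': "cD = cos x * cos y + sin x * sin y" using cD unfolding D by (simp add: cos_diff)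
    show "cA + cD = 2 * ap * am" unfolding cA' cD' ap_def am_def x_def[symmetric] y_def[symmetric] by simp
    have "cA * cD = (cos x)\<^sup>2 * (cos y)\<^sup>2 - (sin x)\<^sup>2 * (sin y)\<^sup>2"
      unfolding cA' cD' by (simp add: algebra_simps power2_eq_square)
    also have "\<dots> = (cos x)\<^sup>2 + (cos y)\<^sup>2 - 1" unfolding sin_squared_eq by (simp add: algebra_simps)
    finally show "cA * cD = ap\<^sup>2 + am\<^sup>2 - 1" unfolding ap_def am_def x_def[symmetric] y_def[symmetric] .
  qed
  have cA1: "cA\<^sup>2 \<noteq> 1"
  proof -
    have "(p 0 \<bullet> p 1)\<^sup>2 \<noteq> (p 0 \<bullet> p 0) * (p 1 \<bullet> p 1)"
      by (rule cs_ne) (use dep4[OF T, of _ _ 0 0] in auto)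
    then show ?thesis using n0 unfolding cA_def by simp
  qed
  have am0: "am \<noteq> 0"
  proof
    assume a: "am = 0"
    have r: "-(pi/2) \<le> (lA - lD) / 2" "(lA - lD) / 2 \<le> pi/2" using lArange lDrange by auto
    have "\<not> (-(pi/2) < (lA - lD) / 2 \<and> (lA - lD) / 2 < pi/2)"
      using cos_gt_zero_pi[of "(lA - lD) / 2"] a unfolding am_def by auto
    then have "lA - lD = pi \<or> lA - lD = -pi" using r by auto
    then have "(lA = pi \<and> lD = 0) \<or> (lA = 0 \<and> lD = pi)" using lArange lDrange by auto
    then have "cA\<^sup>2 = 1" using cA by auto
    then show False using cA1 by simp
  qed
  have F1: "(ap + am)\<^sup>2 - (b + c)\<^sup>2 \<noteq> 0"
  proof -
    have "((p 0 + p 1) \<bullet> (p 2 + p 3))\<^sup>2 \<noteq> ((p 0 + p 1) \<bullet> (p 0 + p 1)) * ((p 2 + p 3) \<bullet> (p 2 + p 3))"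
    proof (rule cs_ne)
      fix \<alpha> \<beta> :: real assume "\<alpha> *\<^sub>R (p 0 + p 1) + \<beta> *\<^sub>R (p 2 + p 3) = 0"
      then have "\<alpha> *\<^sub>R p 0 + \<alpha> *\<^sub>R p 1 + \<beta> *\<^sub>R p 2 + \<beta> *\<^sub>R p 3 = 0" by (simp add: algebra_simps)
      then show "\<alpha> = 0 \<and> \<beta> = 0" using dep4[OF T] by blast
    qed
    then have "(2*b + 2*c)\<^sup>2 \<noteq> (2 + 2*cA) * (2 + 2*cD)"
      using n0 b13 c12 unfolding bb cc cA_def cD_def
      by (simp add: inner_add_left inner_add_right inner_commute algebra_simps)
    moreover have "(2 + 2*cA) * (2 + 2*cD) = 4 * (ap + am)\<^sup>2"
      using trig1 trig2 by (simp add: algebra_simps power2_eq_square)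
    ultimately show ?thesis by (auto simp: algebra_simps power2_eq_square)
  qed
  have F2: "(ap - am)\<^sup>2 - (b - c)\<^sup>2 \<noteq> 0"
  proof -
    have "((p 0 - p 1) \<bullet> (p 2 - p 3))\<^sup>2 \<noteq> ((p 0 - p 1) \<bullet> (p 0 - p 1)) * ((p 2 - p 3) \<bullet> (p 2 - p 3))"
    proof (rule cs_ne)
      fix \<alpha> \<beta> :: real assume "\<alpha> *\<^sub>R (p 0 - p 1) + \<beta> *\<^sub>R (p 2 - p 3) = 0"
      then have "\<alpha> *\<^sub>R p 0 + (-\<alpha>) *\<^sub>R p 1 + \<beta> *\<^sub>R p 2 + (-\<beta>) *\<^sub>R p 3 = 0" by (simp add: algebra_simps)
      then show "\<alpha> = 0 \<and> \<beta> = 0" using dep4[OF T] by fastforce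
    qed
    then have "(2*b - 2*c)\<^sup>2 \<noteq> (2 - 2*cA) * (2 - 2*cD)"
      using n0 b13 c12 unfolding bb cc cA_def cD_def
      by (simp add: inner_diff_left inner_diff_right inner_commute algebra_simps)
    moreover have "(2 - 2*cA) * (2 - 2*cD) = 4 * (ap - am)\<^sup>2"
      using trig1 trig2 by (simp add: algebra_simps power2_eq_square)
    ultimately show ?thesis by (auto simp: algebra_simps power2_eq_square)
  qed
  have DD: "(ap + am + b + c) * (ap + am - b - c) * (ap - am - b + c) * (ap - am + b - c) \<noteq> 0"
  proof -
    have "(ap + am + b + c) * (ap + am - b - c) * (ap - am - b + c) * (ap - am + b - c)
        = ((ap + am)\<^sup>2 - (b + c)\<^sup>2) * ((ap - am)\<^sup>2 - (b - c)\<^sup>2)"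
      by (simp add: algebra_simps power2_eq_square)
    then show ?thesis using F1 F2 by simp
  qed
  show ?thesis
    using alg[OF am0 DD] unfolding Let_def lA_def[symmetric] lD_def[symmetric]
      ap_def[symmetric] am_def[symmetric] b_def[symmetric] c_def[symmetric] .
qed
end
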